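(* Let $n \ge 2$ and suppose every maximal order $\Gamma$ in $\mathbb{Q}[\zeta_{2n}, j]$ with $\mathbb{Z}[\zeta_{2n}, j] \subseteq \Gamma$ satisfies $\Gamma_0^\times := \{\alpha \in \Gamma : \mathrm{nr}(\alpha) = 1\} \cong Q_{4n}$. Let $I \le \mathbb{Z}[\zeta_{2n}, j]$ be a left ideal, and suppose there exist $u_1, \dots, u_l \in \mathbb{Q}[\zeta_{2n}, j]$ with $\mathrm{nr}(u_i) = 1$ and $I u_i \subseteq I$ for $1 \le i \le l$, such that the group $\langle u_1, \dots, u_l \rangle$ is not isomorphic to a subgroup of $Q_{4n}$. Then $I$ is not a free $\mathbb{Z}[\zeta_{2n}, j]$-module.
   Context: $\zeta_d = e^{2\pi i/d}$; $\mathbb{Z}[\zeta_d, j]$ denotes the subring of the real quaternions $\mathbb{R}[i,j]$ generated by $\zeta_d$ (viewed in $\mathbb{R}+\mathbb{R}i \cong \mathbb{C}$) and $j$, and $\mathbb{Q}[\zeta_d, j] = \mathbb{Q}\otimes\mathbb{Z}[\zeta_d,j]$, a quaternion algebra over $\mathbb{Q}(\zeta_d + \zeta_d^{-1})$. $\mathrm{nr}$ denotes the reduced norm. $Q_{4n}$ is the quaternion group of order $4n$. *)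

theory Defs
  imports "HOL-Analysis.Analysis" "HOL-Algebra.Algebra"
begin

text \<open>A real quaternion is written uniquely as a + b j with a, b complex numbers
  (complex numbers viewed inside R + R i), where j^2 = -1 and j z = cnj z j.\<close>

datatype quat = Quat (cpart: complex) (jpart: complex)

instantiation quat :: ring_1
begin
definition "0 = Quat 0 0"
definition "1 = Quat 1 0"
definition "p + q = Quat (cpart p + cpart q) (jpart p + jpart q)"
definition "p - q = Quat (cpart p - cpart q) (jpart p - jpart q)"
definition "- p = Quat (- cpart p) (- jpart p)"
definition "p * q = Quat (cpart p * cpart q - jpart p * cnj (jpart q))
                         (cpart p * jpart q + jpart p * cnj (cpart q))"
instance
  by standard
     (auto simp: zero_quat_def one_quat_def plus_quat_def minus_quat_def
        uminus_quat_def times_quat_def algebra_simps quat.expand)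
end

definition cq :: "complex \<Rightarrow> quat" where "cq z = Quat z 0"
definition jq :: quat where "jq = Quat 0 1"

definition nr :: "quat \<Rightarrow> real" where
  "nr q = (cmod (cpart q))\<^sup>2 + (cmod (jpart q))\<^sup>2"

definition zeta :: "nat \<Rightarrow> complex" where "zeta d = cis (2 * pi / real d)"

inductive_set Zring :: "nat \<Rightarrow> quat set" for d where
  one: "1 \<in> Zring d"
| zeta: "cq (zeta d) \<in> Zring d"
| j: "jq \<in> Zring d"
| add: "x \<in> Zring d \<Longrightarrow> y \<in> Zring d \<Longrightarrow> x + y \<in> Zring d"
| neg: "x \<in> Zring d \<Longrightarrow> - x \<in> Zring d"
| mult: "x \<in> Zring d \<Longrightarrow> y \<in> Zring d \<Longrightarrow> x * y \<in> Zring d"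

text \<open>Q \<otimes> Z[zeta_d,j], realised as its (isomorphic) image in the real quaternions,
  i.e. the Q-span of Z[zeta_d,j].\<close>
definition Qalg :: "nat \<Rightarrow> quat set" where
  "Qalg d = {cq (of_real (1 / real m)) * x | m x. m > 0 \<and> x \<in> Zring d}"

definition subring_q :: "quat set \<Rightarrow> bool" where
  "subring_q R \<longleftrightarrow> 1 \<in> R \<and> (\<forall>x\<in>R. \<forall>y\<in>R. x + y \<in> R \<and> - x \<in> R \<and> x * y \<in> R)"

definition fin_gen_Z :: "quat set \<Rightarrow> bool" where
  "fin_gen_Z M \<longleftrightarrow> (\<exists>S. finite S \<and> M = {\<Sum>s\<in>S. of_int (c s) * s | c. True})"

text \<open>A (Z-)order in the Q-algebra A: a subring that is a finitely generated
  Z-module and contains a Q-basis of A (Q \<Gamma> = A).\<close>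
definition is_order :: "quat set \<Rightarrow> quat set \<Rightarrow> bool" where
  "is_order A \<Gamma> \<longleftrightarrow> \<Gamma> \<subseteq> A \<and> subring_q \<Gamma> \<and> fin_gen_Z \<Gamma> \<and>
     (\<forall>a\<in>A. \<exists>m::int. m > 0 \<and> of_int m * a \<in> \<Gamma>)"

definition maximal_order :: "quat set \<Rightarrow> quat set \<Rightarrow> bool" where
  "maximal_order A \<Gamma> \<longleftrightarrow> is_order A \<Gamma> \<and> (\<forall>\<Gamma>'. is_order A \<Gamma>' \<and> \<Gamma> \<subseteq> \<Gamma>' \<longrightarrow> \<Gamma>' = \<Gamma>)"

definition unitq :: "quat monoid" where
  "unitq = \<lparr>carrier = {q. nr q = 1}, mult = (*), one = 1\<rparr>"

definition norm_one_group :: "quat set \<Rightarrow> quat monoid" where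
  "norm_one_group \<Gamma> = unitq\<lparr>carrier := {\<alpha> \<in> \<Gamma>. nr \<alpha> = 1}\<rparr>"

text \<open>The quaternion (binary dihedral) group Q_{4n} of order 4n, realised as the
  subgroup of unit quaternions generated by zeta_{2n} and j.\<close>
definition Q4 :: "nat \<Rightarrow> quat monoid" where
  "Q4 n = unitq\<lparr>carrier := {cq (zeta (2*n) ^ k) | k. k < 2*n}
                          \<union> {cq (zeta (2*n) ^ k) * jq | k. k < 2*n}\<rparr>"

definition left_ideal :: "quat set \<Rightarrow> quat set \<Rightarrow> bool" where
  "left_ideal R I \<longleftrightarrow> I \<subseteq> R \<and> 0 \<in> I \<and>
     (\<forall>x\<in>I. \<forall>y\<in>I. x + y \<in> I \<and> - x \<in> I) \<and> (\<forall>r\<in>R. \<forall>x\<in>I. r * x \<in> I)"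

definition free_left_module :: "quat set \<Rightarrow> quat set \<Rightarrow> bool" where
  "free_left_module R M \<longleftrightarrow> (\<exists>B \<subseteq> M.
     (\<forall>F c. finite F \<and> F \<subseteq> B \<and> (\<forall>b\<in>F. c b \<in> R) \<and> (\<Sum>b\<in>F. c b * b) = 0
            \<longrightarrow> (\<forall>b\<in>F. c b = 0)) \<and>
     (\<forall>x\<in>M. \<exists>F c. finite F \<and> F \<subseteq> B \<and> (\<forall>b\<in>F. c b \<in> R) \<and> x = (\<Sum>b\<in>F. c b * b)))"

end

theory Submission
  imports Defs "HOL-Computational_Algebra.Computational_Algebra" "HOL-Number_Theory.Number_Theory"
begin


abbreviation psmult where "psmult \<equiv> Polynomial.smult"
abbreviation pmonom where "pmonom \<equiv> Polynomial.monom"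
abbreviation pcontent where "pcontent \<equiv> Polynomial.content"
abbreviation pdeg where "pdeg \<equiv> Polynomial.degree"
abbreviation pcoeff where "pcoeff \<equiv> Polynomial.coeff"
abbreviation plc where "plc \<equiv> Polynomial.lead_coeff"

abbreviation ip :: "int poly \<Rightarrow> complex \<Rightarrow> complex" where
  "ip P x \<equiv> poly (map_poly of_int P) x"

lemma mpi_add: "map_poly (of_int::int\<Rightarrow>complex) (p + q) = map_poly of_int p + map_poly of_int q"
  by (rule poly_eqI) (simp add: coeff_map_poly)
lemma mpi_diff: "map_poly (of_int::int\<Rightarrow>complex) (p - q) = map_poly of_int p - map_poly of_int q"
  by (rule poly_eqI) (simp add: coeff_map_poly)
lemma mpi_uminus: "map_poly (of_int::int\<Rightarrow>complex) (- p) = - map_poly of_int p"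
  by (rule poly_eqI) (simp add: coeff_map_poly)
lemma mpi_mult: "map_poly (of_int::int\<Rightarrow>complex) (p * q) = map_poly of_int p * map_poly of_int q"
  by (rule poly_eqI) (simp add: coeff_map_poly coeff_mult)
lemma mpi_smult: "map_poly (of_int::int\<Rightarrow>complex) (psmult c p) = psmult (of_int c) (map_poly of_int p)"
  by (rule poly_eqI) (simp add: coeff_map_poly)
lemma mpi_const: "map_poly (of_int::int\<Rightarrow>complex) [:c:] = [:of_int c:]"
  by (rule poly_eqI) (simp add: coeff_map_poly coeff_pCons split: nat.splits)
lemma mpi_one: "map_poly (of_int::int\<Rightarrow>complex) 1 = 1"
  by simp
lemma mpi_monom: "map_poly (of_int::int\<Rightarrow>complex) (pmonom c k) = pmonom (of_int c) k"
  by (simp add: map_poly_monom)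
lemma mpi_power: "map_poly (of_int::int\<Rightarrow>complex) (p ^ k) = (map_poly of_int p) ^ k"
  by (induction k) (simp_all add: mpi_mult)
lemma mpi_pcompose: "map_poly (of_int::int\<Rightarrow>complex) (pcompose p q) = pcompose (map_poly of_int p) (map_poly of_int q)"
  by (induction p) (simp_all add: map_poly_pCons pcompose_pCons mpi_add mpi_mult mpi_const)
lemma mpi_pderiv: "map_poly (of_int::int\<Rightarrow>complex) (pderiv p) = pderiv (map_poly of_int p)"
  by (rule poly_eqI) (simp add: coeff_map_poly coeff_pderiv)

lemma ip_add[simp]: "ip (p + q) x = ip p x + ip q x" by (simp add: mpi_add)
lemma ip_diff[simp]: "ip (p - q) x = ip p x - ip q x" by (simp add: mpi_diff)
lemma ip_uminus[simp]: "ip (- p) x = - ip p x" by (simp add: mpi_uminus)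
lemma ip_mult[simp]: "ip (p * q) x = ip p x * ip q x" by (simp add: mpi_mult)
lemma ip_smult[simp]: "ip (psmult c p) x = of_int c * ip p x" by (simp add: mpi_smult)
lemma ip_const[simp]: "ip [:c:] x = of_int c" by (simp add: mpi_const)
lemma ip_monom[simp]: "ip (pmonom c k) x = of_int c * x ^ k" by (simp add: mpi_monom poly_monom)
lemma ip_power[simp]: "ip (p ^ k) x = (ip p x) ^ k" by (simp add: mpi_power)
lemma ip_pcompose[simp]: "ip (pcompose p q) x = ip p (ip q x)" by (simp add: mpi_pcompose poly_pcompose)
lemma ip_pderiv: "ip (pderiv p) x = poly (pderiv (map_poly of_int p)) x" by (simp add: mpi_pderiv)

definition minp :: "complex \<Rightarrow> int poly \<Rightarrow> bool" where
  "minp x g \<longleftrightarrow> g \<noteq> 0 \<and> ip g x = 0 \<and> (\<forall>R. ip R x = 0 \<longrightarrow> g dvd R)"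

lemma minp_exists:
  assumes "R0 \<noteq> 0" "ip R0 x = 0"
  shows "\<exists>g. minp x g"
proof -
  define P where "P = (\<lambda>d. \<exists>R. R \<noteq> 0 \<and> ip R x = 0 \<and> pdeg R = d)"
  have "P (pdeg R0)" using assms P_def by blast
  then have "P (LEAST d. P d)" by (rule LeastI)
  then obtain g0 where g0: "g0 \<noteq> 0" "ip g0 x = 0" "pdeg g0 = (LEAST d. P d)"
    unfolding P_def by blast
  have minimal: "pdeg g0 \<le> pdeg R" if "R \<noteq> 0" "ip R x = 0" for R
    using that g0(3) P_def by (metis Least_le)
  define g where "g = primitive_part g0"
  have cg: "pcontent g = 1" using g0 by (simp add: g_def content_primitive_part)
  have g0eq: "psmult (pcontent g0) g = g0" by (simp add: g_def content_times_primitive_part)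
  have cne: "pcontent g0 \<noteq> 0" using g0 by simp
  have gx: "ip g x = 0"
  proof -
    have "ip g0 x = of_int (pcontent g0) * ip g x" by (subst g0eq[symmetric]) simp
    then show ?thesis using g0 cne by simp
  qed
  have gne: "g \<noteq> 0" using g0eq g0 by auto
  have dg: "pdeg g = pdeg g0" by (simp add: g_def)
  have "g dvd R" if R: "ip R x = 0" for R
  proof -
    obtain a q where aq: "a \<noteq> 0" "psmult a R = g * q + pseudo_mod R g"
      using pseudo_mod(1)[OF gne] by blast
    define r where "r = pseudo_mod R g"
    have rd: "r = 0 \<or> pdeg r < pdeg g" using pseudo_mod(2)[OF gne] r_def by simp
    have "ip r x = 0"
    proof -
      have "ip (psmult a R) x = ip (g * q + r) x" using aq r_def by simp
      then show ?thesis using R gx by simp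
    qed
    then have "r = 0" using rd minimal dg by (metis leD)
    then have eq: "psmult a R = g * q" using aq r_def by simp
    have "map_poly to_fract (psmult a R) = map_poly to_fract g * map_poly to_fract q"
      using eq by simp
    then have "psmult (to_fract a) (map_poly to_fract R) = map_poly to_fract g * map_poly to_fract q"
      by simp
    then have "map_poly to_fract R = map_poly to_fract g * psmult (inverse (to_fract a)) (map_poly to_fract q)"
      using aq(1) by (metis (no_types, lifting) mult_smult_right smult_smult to_fract_eq_0_iff
          field_class.field_inverse mult.commute smult_1_left)
    then have "map_poly to_fract g dvd map_poly to_fract R" by (metis dvdI)
    then show ?thesis using fract_poly_dvdD cg by blast
  qed
  then show ?thesis unfolding minp_def using gne gx by blast
qed

lemma ip_pCons[simp]: "ip (pCons a p) x = of_int a + x * ip p x"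
  by (simp add: map_poly_pCons)

lemma ip_sum: "ip (\<Sum>i\<in>A. f i) x = (\<Sum>i\<in>A. ip (f i) x)"
  by (induction A rule: infinite_finite_induct) simp_all

lemma ip_of_nat[simp]: "ip (of_nat k) x = of_nat k"
  by (subst of_nat_poly) simp
lemma ip_of_int[simp]: "ip (of_int k) x = of_int k"
  by (subst of_int_poly) simp

lemma minp_dvd: "minp x g \<Longrightarrow> ip R x = 0 \<Longrightarrow> g dvd R"
  unfolding minp_def by blast

lemma minp_root: "minp x g \<Longrightarrow> ip g x = 0"
  unfolding minp_def by blast

lemma minp_nz: "minp x g \<Longrightarrow> g \<noteq> 0"
  unfolding minp_def by blast

lemma minp_deg_le: "minp x g \<Longrightarrow> R \<noteq> 0 \<Longrightarrow> ip R x = 0 \<Longrightarrow> pdeg g \<le> pdeg R"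
proof -
  assume a: "minp x g" "R \<noteq> 0" "ip R x = 0"
  then have "g dvd R" by (intro minp_dvd)
  then show ?thesis using dvd_imp_degree_le a(2) by blast
qed

lemma minp_deg_pos: "minp x g \<Longrightarrow> pdeg g > 0"
proof (rule ccontr)
  assume m: "minp x g" and "\<not> pdeg g > 0"
  then have "pdeg g = 0" by simp
  then obtain c where "g = [:c:]" using degree_eq_zeroE by blast
  moreover have "g \<noteq> 0" "ip g x = 0" using m by (auto simp: minp_def)
  ultimately show False by simp
qed

lemma minp_uminus: "minp x g \<Longrightarrow> minp x (- g)"
  unfolding minp_def by (auto simp: dvd_minus_iff)

definition Xm1 :: "nat \<Rightarrow> int poly" where "Xm1 L = pmonom 1 L - 1"

lemma ip_Xm1[simp]: "ip (Xm1 L) x = x ^ L - 1"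
  by (simp add: Xm1_def)

lemma Xm1_deg: "L > 0 \<Longrightarrow> pdeg (Xm1 L) = L"
proof -
  assume L: "L > 0"
  have "Xm1 L = pmonom 1 L + [:-1:]" by (simp add: Xm1_def one_pCons)
  also have "pdeg \<dots> = pdeg (pmonom (1::int) L)"
    using L by (intro degree_add_eq_left) (simp add: degree_monom_eq)
  finally show ?thesis by (simp add: degree_monom_eq)
qed

lemma Xm1_lc: "L > 0 \<Longrightarrow> plc (Xm1 L) = 1"
  using Xm1_deg[of L] by (simp add: Xm1_def)

lemma Xm1_nz: "L > 0 \<Longrightarrow> Xm1 L \<noteq> 0"
  proof
  assume "L > 0" "Xm1 L = 0"
  then have "plc (Xm1 L) = 0" by simp
  then show False using Xm1_lc[OF \<open>L > 0\<close>] by simp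
qed

lemma minp_unity:
  assumes "x ^ L = 1" "L > 0"
  shows "\<exists>g. minp x g \<and> plc g = 1 \<and> g dvd Xm1 L"
proof -
  obtain g where g: "minp x g" using minp_exists[of "Xm1 L" x] assms Xm1_nz by auto
  have d: "g dvd Xm1 L" using g assms by (intro minp_dvd) auto
  then obtain k where k: "Xm1 L = g * k" by (elim dvdE)
  have "plc g * plc k = 1" using k Xm1_lc[OF assms(2)] by (metis lead_coeff_mult)
  then have "plc g = 1 \<or> plc g = -1" using zmult_eq_1_iff by blast
  then show ?thesis
  proof
    assume "plc g = 1" then show ?thesis using g d by blast
  next
    assume "plc g = -1"
    then have "plc (-g) = 1" by simp
    moreover have "-g dvd Xm1 L" using d by simp
    ultimately show ?thesis using minp_uminus[OF g] by blast
  qed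
qed

lemma monic_reduce:
  fixes g P :: "int poly"
  assumes "plc g = 1"
  shows "\<exists>q r. P = g * q + r \<and> (r = 0 \<or> pdeg r < pdeg g)"
proof -
  have gne: "g \<noteq> 0" using assms by auto
  obtain q r where qr: "pseudo_divmod P g = (q, r)" by (cases "pseudo_divmod P g")
  have "psmult (pcoeff g (pdeg g) ^ (Suc (pdeg P) - pdeg g)) P = g * q + r"
    using pseudo_divmod(1)[OF gne qr] .
  moreover have "pcoeff g (pdeg g) ^ (Suc (pdeg P) - pdeg g) = 1" using assms by simp
  ultimately have "P = g * q + r" by (metis smult_1_left)
  moreover have "r = 0 \<or> pdeg r < pdeg g" using pseudo_divmod(2)[OF gne qr] .
  ultimately show ?thesis by blast
qed




abbreviation nprime :: "nat \<Rightarrow> bool" where "nprime p \<equiv> normalization_semidom_class.prime p"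

lemma binom_prime:
  fixes A B :: "'a::comm_ring_1"
  assumes p: "nprime p"
  shows "\<exists>W. (A + B) ^ p = A ^ p + B ^ p + of_nat p * W"
proof -
  have p0: "p > 0" using p prime_gt_0_nat by blast
  have p1: "p > 1" using p prime_gt_1_nat by blast
  define W where "W = (\<Sum>k\<in>{1..<p}. of_nat ((p choose k) div p) * A ^ k * B ^ (p - k))"
  have "(A + B) ^ p = (\<Sum>k\<le>p. of_nat (p choose k) * A ^ k * B ^ (p - k))"
    by (rule binomial_ring)
  also have "{..p} = insert 0 (insert p {1..<p})" using p0 by auto
  also have "(\<Sum>k\<in>insert 0 (insert p {1..<p}). of_nat (p choose k) * A ^ k * B ^ (p - k))
      = B ^ p + (A ^ p + (\<Sum>k\<in>{1..<p}. of_nat (p choose k) * A ^ k * B ^ (p - k)))"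
    using p0 by (simp add: sum.insert)
  also have "(\<Sum>k\<in>{1..<p}. of_nat (p choose k) * A ^ k * B ^ (p - k)) = of_nat p * W"
  proof -
    have "(\<Sum>k\<in>{1..<p}. of_nat (p choose k) * A ^ k * B ^ (p - k))
        = (\<Sum>k\<in>{1..<p}. of_nat p * (of_nat ((p choose k) div p) * A ^ k * B ^ (p - k)))"
    proof (rule sum.cong)
      fix k assume k: "k \<in> {1..<p}"
      have "p dvd (p choose k)" using k p by (intro dvd_choose_prime) auto
      then have "p choose k = p * ((p choose k) div p)" by simp
      then have "(of_nat (p choose k) :: 'a) = of_nat p * of_nat ((p choose k) div p)"
        by (metis of_nat_mult)
      then show "of_nat (p choose k) * A ^ k * B ^ (p - k) =
           of_nat p * (of_nat ((p choose k) div p) * A ^ k * B ^ (p - k))"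
        by (simp add: mult.assoc)
    qed simp
    also have "\<dots> = of_nat p * W" unfolding W_def by (simp add: sum_distrib_left)
    finally show ?thesis .
  qed
  finally have "(A + B) ^ p = A ^ p + B ^ p + of_nat p * W" by (simp add: algebra_simps)
  then show ?thesis by blast
qed

lemma fermat_int:
  assumes p: "nprime p"
  shows "\<exists>w. (a::int) ^ p - a = int p * w"
proof (induction a rule: int_induct[where k = 0])
  case base
  have "p > 0" using p prime_gt_0_nat by blast
  then show ?case by (intro exI[of _ 0]) (simp add: power_0_left)
next
  case (step1 i)
  then obtain w where w: "i ^ p - i = int p * w" by blast
  obtain W where W: "(i + 1) ^ p = i ^ p + 1 ^ p + of_nat p * W" using binom_prime[OF p] by blast
  have "(i + 1) ^ p - (i + 1) = int p * (w + W)" using w W by (simp add: algebra_simps)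
  then show ?case by blast
next
  case (step2 i)
  then obtain w where w: "i ^ p - i = int p * w" by blast
  obtain W where W: "((i - 1) + 1) ^ p = (i - 1) ^ p + 1 ^ p + of_nat p * W" using binom_prime[OF p] by blast
  have "(i - 1) ^ p - (i - 1) = int p * (w - W)" using w W by (simp add: algebra_simps)
  then show ?case by blast
qed

definition pcong :: "nat \<Rightarrow> int poly \<Rightarrow> int poly \<Rightarrow> bool" where
  "pcong p A B \<longleftrightarrow> (\<exists>W. A - B = of_nat p * W)"

lemma pcong_refl: "pcong p A A"
  unfolding pcong_def by (rule exI[of _ 0]) simp

lemma pcong_trans: "pcong p A B \<Longrightarrow> pcong p B C \<Longrightarrow> pcong p A C"
  unfolding pcong_def by (metis (no_types, lifting) diff_add_cancel add_diff_eq distrib_left diff_add_eq)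

lemma pcong_add: "pcong p A B \<Longrightarrow> pcong p C D \<Longrightarrow> pcong p (A + C) (B + D)"
  unfolding pcong_def
proof (elim exE)
  fix W1 W2 assume "A - B = of_nat p * W1" "C - D = of_nat p * W2"
  then have "A + C - (B + D) = of_nat p * (W1 + W2)" by (simp add: algebra_simps)
  then show "\<exists>W. A + C - (B + D) = of_nat p * W" by blast
qed

lemma pcong_mult: "pcong p A B \<Longrightarrow> pcong p C D \<Longrightarrow> pcong p (A * C) (B * D)"
  unfolding pcong_def
proof (elim exE)
  fix W1 W2 assume "A - B = of_nat p * W1" "C - D = of_nat p * W2"
  then have "A * C - B * D = of_nat p * (W1 * C + B * W2)"
    by (simp add: algebra_simps)
  then show "\<exists>W. A * C - B * D = of_nat p * W" by blast
qed

lemma frobenius_poly: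
  assumes p: "nprime p"
  shows "pcong p (P ^ p) (pcompose P (pmonom 1 p))"
proof (induction P)
  case 0
  have "p > 0" using p prime_gt_0_nat by blast
  then show ?case by (simp add: pcong_refl power_0_left)
next
  case (pCons a P)
  have e: "pCons a P = [:a:] + pmonom 1 1 * P"
    by (simp add: monom_Suc monom_0 one_pCons)
  obtain W where W: "([:a:] + pmonom 1 1 * P) ^ p = [:a:] ^ p + (pmonom 1 1 * P) ^ p + of_nat p * W"
    using binom_prime[OF p] by blast
  have c1: "pcong p (pCons a P ^ p) ([:a:] ^ p + (pmonom 1 1 * P) ^ p)"
    unfolding pcong_def using e W by auto
  obtain w where w: "a ^ p - a = int p * w" using fermat_int[OF p] by blast
  have c2: "pcong p ([:a:] ^ p) [:a:]"
  proof -
    have "[:a:] ^ p - [:a:] = [:a ^ p - a:]" by (simp add: poly_const_pow)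
    also have "\<dots> = of_nat p * [:w:]" using w by (simp add: of_nat_poly)
    finally show ?thesis unfolding pcong_def by blast
  qed
  have c3: "pcong p ((pmonom 1 1 * P) ^ p) (pmonom 1 p * pcompose P (pmonom 1 p))"
  proof -
    have "(pmonom 1 1 * P) ^ p = pmonom 1 p * P ^ p"
      by (simp add: power_mult_distrib monom_power)
    then show ?thesis using pcong_mult[OF pcong_refl pCons.IH] by simp
  qed
  have "pcong p (pCons a P ^ p) ([:a:] + pmonom 1 p * pcompose P (pmonom 1 p))"
    using pcong_trans[OF c1 pcong_add[OF c2 c3]] .
  moreover have "pcompose (pCons a P) (pmonom 1 p) = [:a:] + pmonom 1 p * pcompose P (pmonom 1 p)"
    by (simp add: pcompose_pCons)
  ultimately show ?case by simp
qed

lemma frobenius_val: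
  assumes p: "nprime p"
  shows "\<exists>W. (ip P x) ^ p = ip P (x ^ p) + of_nat p * ip W x"
proof -
  obtain W where "P ^ p - pcompose P (pmonom 1 p) = of_nat p * W"
    using frobenius_poly[OF p] unfolding pcong_def by blast
  then have "ip (P ^ p - pcompose P (pmonom 1 p)) x = ip (of_nat p * W) x" by simp
  then have "(ip P x) ^ p = ip P (x ^ p) + of_nat p * ip W x" by (simp add: algebra_simps)
  then show ?thesis by blast
qed




lemma minp_int_dvd:
  assumes g: "minp x g" "plc g = 1" and p: "p > 0"
    and eq: "of_int c = of_nat p * ip T x"
  shows "int p dvd c"
proof -
  obtain q r where qr: "T = g * q + r" "r = 0 \<or> pdeg r < pdeg g"
    using monic_reduce[OF g(2)] by blast
  have gx: "ip g x = 0" using g(1) by (rule minp_root)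
  have Tr: "ip T x = ip r x" using qr(1) gx by simp
  define D where "D = of_nat p * r - [:c:]"
  have Dx: "ip D x = 0" using eq Tr by (simp add: D_def)
  have dpos: "pdeg g > 0" using g(1) by (rule minp_deg_pos)
  have "pdeg D < pdeg g"
  proof -
    have "pdeg D \<le> max (pdeg (of_nat p * r)) (pdeg [:c:])"
      unfolding D_def by (rule degree_diff_le_max)
    also have "pdeg (of_nat p * r) \<le> pdeg r"
      by (metis degree_mult_le degree_of_nat add_0)
    then have "max (pdeg (of_nat p * r)) (pdeg [:c:]) \<le> pdeg r" by simp
    finally have "pdeg D \<le> pdeg r" .
    then show ?thesis using qr(2) dpos by auto
  qed
  then have "D = 0" using minp_deg_le[OF g(1) _ Dx] by (meson leD)
  then have "of_nat p * r = [:c:]" by (simp add: D_def)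
  then have "pcoeff (of_nat p * r) 0 = c" by simp
  then have "int p * pcoeff r 0 = c" by (simp add: coeff_mult_0 of_nat_poly)
  then show ?thesis by (metis dvd_triv_left)
qed

lemma transfer_prime:
  assumes x: "x ^ L = 1" and L: "L > 0" and p: "nprime p" and pL: "\<not> p dvd L"
    and R: "ip R x = 0"
  shows "ip R (x ^ p) = 0"
proof -
  obtain g where g: "minp x g" "plc g = 1" "g dvd Xm1 L" using minp_unity[OF x L] by blast
  show ?thesis
  proof (cases "ip g (x ^ p) = 0")
    case True
    obtain Q where "R = g * Q" using minp_dvd[OF g(1) R] by (elim dvdE)
    then show ?thesis using True by simp
  next
    case False
    obtain k1 where k1: "Xm1 L = g * k1" using g(3) by (elim dvdE)
    have xpL: "(x ^ p) ^ L = 1" using x by (metis power_mult power_mult_distrib power_one mult.commute)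
    have "ip (Xm1 L) (x ^ p) = 0" using xpL by simp
    then have "ip g (x ^ p) * ip k1 (x ^ p) = 0" using k1 by simp
    then have k1r: "ip k1 (x ^ p) = 0" using False by simp
    obtain h where h: "minp (x ^ p) h" "plc h = 1" "h dvd Xm1 L" using minp_unity[OF xpL L] by blast
    obtain k where k: "k1 = h * k" using minp_dvd[OF h(1) k1r] by (elim dvdE)
    have gx: "ip g x = 0" using g(1) by (rule minp_root)
    have hxp: "ip h (x ^ p) = 0" using h(1) by (rule minp_root)
    have "pderiv (Xm1 L) = pderiv (g * (h * k))" using k1 k by simp
    then have "ip (pderiv (Xm1 L)) x = ip (pderiv (g * (h * k))) x" by simp
    moreover have "ip (pderiv (Xm1 L)) x = of_nat L * x ^ (L - 1)"
      by (simp add: Xm1_def pderiv_monom pderiv_diff)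
    moreover have "ip (pderiv (g * (h * k))) x = ip h x * (ip k x * ip (pderiv g) x)"
      using gx by (simp add: pderiv_mult)
    ultimately have der: "of_nat L * x ^ (L - 1) = ip h x * (ip k x * ip (pderiv g) x)" by simp
    obtain W where W: "(ip h x) ^ p = ip h (x ^ p) + of_nat p * ip W x"
      using frobenius_val[OF p] by blast
    define T where "T = W * (k * pderiv g) ^ p * pmonom 1 p"
    have "of_nat (L ^ p) = (of_nat L * x ^ (L - 1)) ^ p * x ^ p"
    proof -
      have "(of_nat L * x ^ (L - 1)) ^ p * x ^ p = of_nat L ^ p * x ^ ((L - 1) * p + p)"
        by (simp add: power_mult_distrib power_mult power_add)
      also have "(L - 1) * p + p = L * p" using L by (cases L) auto
      also have "x ^ (L * p) = 1" using x by (simp add: power_mult)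
      finally show ?thesis by simp
    qed
    also have "\<dots> = (ip h x) ^ p * (ip k x * ip (pderiv g) x) ^ p * x ^ p"
      using der by (simp add: power_mult_distrib)
    also have "\<dots> = of_nat p * ip T x"
      using W hxp by (simp add: T_def power_mult_distrib)
    finally have "of_int (int (L ^ p)) = of_nat p * ip T x" by simp
    then have "int p dvd int (L ^ p)"
      using minp_int_dvd[OF g(1) g(2)] p prime_gt_0_nat by blast
    then have "p dvd L ^ p" by (metis of_nat_dvd_iff of_nat_power)
    then have "p dvd L" using p prime_dvd_power by blast
    then show ?thesis using pL by contradiction
  qed
qed


lemma transfer_coprime:
  assumes x: "x ^ L = 1" and L: "L > 0" and R: "ip R x = 0"
  shows "coprime k L \<Longrightarrow> ip R (x ^ k) = 0"
proof (induction k rule: less_induct)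
  case (less k)
  show ?case
  proof (cases "k \<le> 1")
    case True
    then consider "k = 0" | "k = 1" by linarith
    then show ?thesis
    proof cases
      case 1
      then have "L = 1" using less.prems by simp
      then have "x = 1" using x by simp
      then show ?thesis using R 1 by simp
    next
      case 2
      then show ?thesis using R by simp
    qed
  next
    case False
    then have "k \<noteq> 1" by simp
    then obtain p where p: "nprime p" "p dvd k" using prime_factor_nat by blast
    then obtain k' where k': "k = p * k'" by (elim dvdE)
    have k'0: "k' > 0" using False k' by (cases k') auto
    have p1: "p > 1" using p prime_gt_1_nat by blast
    have "k' < k" using k' k'0 p1 by simp
    moreover have ck': "coprime k' L" using less.prems k' by simp
    ultimately have IH: "ip R (x ^ k') = 0" using less.IH by blast
    have "\<not> p dvd L"
    proof
      assume "p dvd L"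
      then have "p dvd gcd k L" using p(2) by simp
      then have "p dvd 1" using less.prems by simp
      then show False using p1 by simp
    qed
    moreover have "(x ^ k') ^ L = 1" using x by (metis power_mult power_one mult.commute)
    ultimately have "ip R ((x ^ k') ^ p) = 0" using transfer_prime[OF _ L p(1) _ IH] by blast
    then show ?thesis using k' by (simp add: power_mult mult.commute)
  qed
qed




definition lag :: "complex set \<Rightarrow> complex \<Rightarrow> complex poly" where
  "lag A r = psmult (inverse (\<Prod>s\<in>A - {r}. (r - s))) (\<Prod>s\<in>A - {r}. [:-s, 1:])"

lemma poly_lag: "finite A \<Longrightarrow> r \<in> A \<Longrightarrow> z \<in> A \<Longrightarrow> poly (lag A r) z = (if z = r then 1 else 0)"
proof -
  assume A: "finite A" "r \<in> A" "z \<in> A"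
  have pz: "poly (\<Prod>s\<in>A - {r}. [:-s, 1:]) z = (\<Prod>s\<in>A - {r}. (z - s))"
    by (simp add: poly_prod)
  have nz: "(\<Prod>s\<in>A - {r}. (r - s)) \<noteq> 0" using A(1) by (simp add: prod_zero_iff)
  show ?thesis
  proof (cases "z = r")
    case True
    have "poly (lag A r) z = inverse (\<Prod>s\<in>A - {r}. (r - s)) * (\<Prod>s\<in>A - {r}. (z - s))"
      by (simp add: lag_def pz)
    then show ?thesis using nz True by simp
  next
    case False
    then have "(\<Prod>s\<in>A - {r}. (z - s)) = 0" using A by (intro prod_zero) auto
    then show ?thesis using False by (simp add: lag_def pz)
  qed
qed

lemma degree_lag: "finite A \<Longrightarrow> r \<in> A \<Longrightarrow> pdeg (lag A r) \<le> card A - 1"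
proof -
  assume A: "finite A" "r \<in> A"
  have "pdeg (\<Prod>s\<in>A - {r}. [:-s, 1:]) \<le> (\<Sum>s\<in>A - {r}. pdeg [:-s, 1:])"
    using degree_prod_sum_le[of "A - {r}" "\<lambda>s. [:-s, 1:]"] A by (simp add: o_def)
  also have "\<dots> = card (A - {r})" by simp
  also have "\<dots> = card A - 1" using A by simp
  finally show ?thesis unfolding lag_def by (meson degree_smult_le order_trans)
qed

lemma lagrange_interp:
  fixes P :: "complex poly"
  assumes A: "finite A" and d: "P = 0 \<or> pdeg P < card A"
  shows "P = (\<Sum>r\<in>A. psmult (poly P r) (lag A r))"
proof (rule ccontr)
  define D where "D = P - (\<Sum>r\<in>A. psmult (poly P r) (lag A r))"
  assume "P \<noteq> (\<Sum>r\<in>A. psmult (poly P r) (lag A r))"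
  then have Dnz: "D \<noteq> 0" by (simp add: D_def)
  then have Ane: "A \<noteq> {}" using d by (auto simp: D_def)
  then have cA: "card A > 0" using A by (simp add: card_gt_0_iff)
  have "pdeg (\<Sum>r\<in>A. psmult (poly P r) (lag A r)) \<le> card A - 1"
  proof (rule degree_sum_le)
    show "finite A" by fact
    fix r assume "r \<in> A"
    then show "pdeg (psmult (poly P r) (lag A r)) \<le> card A - 1"
      using degree_lag[OF A] by (meson degree_smult_le order_trans)
  qed
  moreover have "pdeg P \<le> card A - 1" using d cA by auto
  ultimately have dD: "pdeg D \<le> card A - 1" unfolding D_def
    by (meson degree_diff_le_max max.boundedI order_trans)
  have "A \<subseteq> {z. poly D z = 0}"
  proof
    fix z assume z: "z \<in> A"
    have "poly (\<Sum>r\<in>A. psmult (poly P r) (lag A r)) z = (\<Sum>r\<in>A. poly P r * poly (lag A r) z)"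
      by (simp add: poly_sum)
    also have "\<dots> = (\<Sum>r\<in>A. if r = z then poly P r else 0)"
      by (rule sum.cong) (auto simp: poly_lag[OF A _ z])
    also have "\<dots> = poly P z" using z A by simp
    finally show "z \<in> {z. poly D z = 0}" by (simp add: D_def)
  qed
  then have "card A \<le> card {z. poly D z = 0}"
    using poly_roots_finite[OF Dnz] by (intro card_mono)
  also have "\<dots> \<le> pdeg D" using card_poly_roots_bound[OF Dnz] .
  finally show False using dD cA by linarith
qed

lemma lagrange_coeff_bound:
  fixes P :: "complex poly"
  assumes A: "finite A" and d: "P = 0 \<or> pdeg P < card A"
    and b: "\<forall>r\<in>A. cmod (poly P r) \<le> 1"
  shows "cmod (pcoeff P i) \<le> (\<Sum>r\<in>A. cmod (pcoeff (lag A r) i))"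
proof -
  have "pcoeff P i = (\<Sum>r\<in>A. poly P r * pcoeff (lag A r) i)"
    by (subst lagrange_interp[OF A d]) (simp add: coeff_sum)
  also have "cmod \<dots> \<le> (\<Sum>r\<in>A. cmod (poly P r * pcoeff (lag A r) i))"
    by (rule norm_sum)
  also have "\<dots> \<le> (\<Sum>r\<in>A. cmod (pcoeff (lag A r) i))"
  proof (rule sum_mono)
    fix r assume "r \<in> A"
    then have "cmod (poly P r) \<le> 1" using b by blast
    then show "cmod (poly P r * pcoeff (lag A r) i) \<le> cmod (pcoeff (lag A r) i)"
      by (simp add: norm_mult mult_left_le_one_le)
  qed
  finally show ?thesis .
qed

lemma finite_bounded_polys:
  "finite {P::int poly. pdeg P < d \<and> (\<forall>i. \<bar>pcoeff P i\<bar> \<le> C)}"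
proof -
  let ?B = "{P::int poly. pdeg P < d \<and> (\<forall>i. \<bar>pcoeff P i\<bar> \<le> C)}"
  let ?f = "\<lambda>P::int poly. map (pcoeff P) [0..<d]"
  have "inj_on ?f ?B"
  proof (rule inj_onI)
    fix P Q assume P: "P \<in> ?B" and Q: "Q \<in> ?B" and e: "?f P = ?f Q"
    show "P = Q"
    proof (rule poly_eqI)
      fix i
      show "pcoeff P i = pcoeff Q i"
      proof (cases "i < d")
        case True
        then have "?f P ! i = ?f Q ! i" using e by simp
        then show ?thesis using True by simp
      next
        case False
        then have "pcoeff P i = 0" "pcoeff Q i = 0" using P Q by (auto intro!: coeff_eq_0)
        then show ?thesis by simp
      qed
    qed
  qed
  moreover have "?f ` ?B \<subseteq> {xs. set xs \<subseteq> {-C..C} \<and> length xs = d}"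
  proof
    fix xs assume "xs \<in> ?f ` ?B"
    then obtain P where P: "P \<in> ?B" "xs = ?f P" by blast
    have "set xs \<subseteq> {-C..C}"
    proof
      fix c assume "c \<in> set xs"
      then obtain i where "c = pcoeff P i" using P(2) by auto
      moreover have "\<bar>pcoeff P i\<bar> \<le> C" using P(1) by blast
      ultimately show "c \<in> {-C..C}" by (simp add: abs_le_iff)
    qed
    moreover have "length xs = d" using P(2) by simp
    ultimately show "xs \<in> {xs. set xs \<subseteq> {-C..C} \<and> length xs = d}" by blast
  qed
  moreover have "finite {xs. set xs \<subseteq> {-C..C} \<and> length xs = d}"
    by (rule finite_lists_length_eq) simp
  ultimately show ?thesis by (rule inj_on_finite)
qed

lemma deg_mpi: "pdeg (map_poly (of_int::int\<Rightarrow>complex) P) = pdeg P"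
  by (simp add: degree_map_poly)

lemma kronecker_finite:
  fixes g :: "int poly" and A :: "complex set"
  assumes g: "plc g = 1" "ip g w = 0" and A: "finite A" "card A = pdeg g" "\<forall>r\<in>A. ip g r = 0"
    and dpos: "pdeg g > 0"
  shows "finite {y. \<exists>P. y = ip P w \<and> (\<forall>r\<in>A. cmod (ip P r) \<le> 1)}"
proof -
  define d where "d = pdeg g"
  define K where "K = (\<Sum>i<d. \<Sum>r\<in>A. cmod (pcoeff (lag A r) i))"
  have K0: "K \<ge> 0" unfolding K_def by (intro sum_nonneg) auto
  define C where "C = \<lceil>K\<rceil>"
  let ?B = "{P::int poly. pdeg P < d \<and> (\<forall>i. \<bar>pcoeff P i\<bar> \<le> C)}"
  have "{y. \<exists>P. y = ip P w \<and> (\<forall>r\<in>A. cmod (ip P r) \<le> 1)} \<subseteq> (\<lambda>P. ip P w) ` ?B"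
  proof
    fix y assume "y \<in> {y. \<exists>P. y = ip P w \<and> (\<forall>r\<in>A. cmod (ip P r) \<le> 1)}"
    then obtain P where P: "y = ip P w" "\<forall>r\<in>A. cmod (ip P r) \<le> 1" by blast
    obtain q P' where qr: "P = g * q + P'" "P' = 0 \<or> pdeg P' < pdeg g"
      using monic_reduce[OF g(1)] by blast
    have dP': "pdeg P' < d" using qr(2) dpos d_def by auto
    have yP': "y = ip P' w" using P(1) qr(1) g(2) by simp
    have vals: "ip P' r = ip P r" if "r \<in> A" for r using qr(1) A(3) that by simp
    define Pc where "Pc = map_poly (of_int::int\<Rightarrow>complex) P'"
    have dPc: "Pc = 0 \<or> pdeg Pc < card A" using dP' A(2) d_def by (simp add: Pc_def deg_mpi)
    have bPc: "\<forall>r\<in>A. cmod (poly Pc r) \<le> 1" using P(2) vals by (simp add: Pc_def)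
    have "\<bar>pcoeff P' i\<bar> \<le> C" for i
    proof (cases "i < d")
      case True
      have "cmod (pcoeff Pc i) \<le> (\<Sum>r\<in>A. cmod (pcoeff (lag A r) i))"
        by (rule lagrange_coeff_bound[OF A(1) dPc bPc])
      also have "\<dots> \<le> K" unfolding K_def
        using True by (intro member_le_sum) (auto intro: sum_nonneg)
      finally have "cmod (of_int (pcoeff P' i)) \<le> K" by (simp add: Pc_def coeff_map_poly)
      moreover have "cmod (of_int (pcoeff P' i)) = real_of_int \<bar>pcoeff P' i\<bar>"
        by (metis norm_of_int of_int_abs)
      ultimately have "real_of_int \<bar>pcoeff P' i\<bar> \<le> K" by simp
      then show ?thesis unfolding C_def by linarith
    next
      case False
      then have "pcoeff P' i = 0" using dP' by (intro coeff_eq_0) simp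
      then show ?thesis using K0 C_def by simp
    qed
    then have "P' \<in> ?B" using dP' by blast
    then show "y \<in> (\<lambda>P. ip P w) ` ?B" using yP' by blast
  qed
  moreover have "finite ((\<lambda>P. ip P w) ` ?B)" by (intro finite_imageI finite_bounded_polys)
  ultimately show ?thesis by (rule finite_subset)
qed

lemma kronecker_root_of_unity:
  fixes g :: "int poly" and A :: "complex set"
  assumes g: "plc g = 1" "ip g w = 0" and A: "finite A" "card A = pdeg g" "\<forall>r\<in>A. ip g r = 0"
    and dpos: "pdeg g > 0"
    and P: "\<forall>r\<in>A. cmod (ip P r) \<le> 1"
  shows "ip P w = 0 \<or> (\<exists>s>0. (ip P w) ^ s = 1)"
proof -
  let ?F = "{y. \<exists>P. y = ip P w \<and> (\<forall>r\<in>A. cmod (ip P r) \<le> 1)}"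
  have fin: "finite ?F" by (rule kronecker_finite[OF g A dpos])
  have "range (\<lambda>t::nat. (ip P w) ^ t) \<subseteq> ?F"
  proof
    fix y assume "y \<in> range (\<lambda>t::nat. (ip P w) ^ t)"
    then obtain t where t: "y = (ip P w) ^ t" by blast
    have "y = ip (P ^ t) w" using t by simp
    moreover have "\<forall>r\<in>A. cmod (ip (P ^ t) r) \<le> 1"
      using P by (simp add: norm_power power_le_one)
    ultimately show "y \<in> ?F" by blast
  qed
  then have fr: "finite (range (\<lambda>t::nat. (ip P w) ^ t))" using fin by (rule finite_subset)
  have "\<not> inj (\<lambda>t::nat. (ip P w) ^ t)"
  proof
    assume "inj (\<lambda>t::nat. (ip P w) ^ t)"
    then have "finite (UNIV :: nat set)" using finite_imageD[OF fr] by simp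
    then show False by simp
  qed
  then obtain i j where ij: "i \<noteq> j" "(ip P w) ^ i = (ip P w) ^ j" unfolding inj_def by blast
  show ?thesis
  proof (cases "ip P w = 0")
    case True then show ?thesis by simp
  next
    case False
    {
      fix i j :: nat assume ij: "i < j" "(ip P w) ^ i = (ip P w) ^ j"
      have "(ip P w) ^ i * (ip P w) ^ (j - i) = (ip P w) ^ (i + (j - i))"
        by (simp add: power_add)
      also have "i + (j - i) = j" using ij by simp
      finally have "(ip P w) ^ i * (ip P w) ^ (j - i) = (ip P w) ^ i * 1"
        using ij by simp
      then have "(ip P w) ^ (j - i) = 1" using False by simp
      then have "\<exists>s>0. (ip P w) ^ s = 1" using ij(1) by (intro exI[of _ "j - i"]) simp
    }
    note key = this
    show ?thesis
    proof (cases "i < j")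
      case True then show ?thesis using key ij by blast
    next
      case False then have "j < i" using ij(1) by simp
      then show ?thesis using key ij(2) by metis
    qed
  qed
qed




lemma zeta_pow: "zeta N ^ k = cis (2 * pi * real k / real N)"
proof -
  have "zeta N ^ k = cis (real k * (2 * pi / real N))" unfolding zeta_def by (rule Complex.DeMoivre)
  also have "real k * (2 * pi / real N) = 2 * pi * real k / real N" by simp
  finally show ?thesis .
qed

lemma zeta_pow_eq_1: assumes "N > 0" shows "zeta N ^ k = 1 \<longleftrightarrow> N dvd k"
proof -
  have "zeta N ^ k = zeta N ^ (k mod N)"
  proof -
    have "zeta N ^ N = 1" using assms by (simp add: zeta_pow)
    have "zeta N ^ k = zeta N ^ (N * (k div N) + k mod N)" by (simp only: mult_div_mod_eq)
    also have "\<dots> = (zeta N ^ N) ^ (k div N) * zeta N ^ (k mod N)" by (simp only: power_add power_mult)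
    also have "\<dots> = zeta N ^ (k mod N)" using \<open>zeta N ^ N = 1\<close> by simp
    finally show ?thesis .
  qed
  moreover have "zeta N ^ (k mod N) = 1 \<longleftrightarrow> k mod N = 0"
  proof
    assume h: "zeta N ^ (k mod N) = 1"
    have inj: "inj_on (\<lambda>k. cis (2 * pi * real k / real N)) {..<N}"
      using Complex.bij_betw_roots_unity[OF assms] by (simp add: bij_betw_def)
    have e: "(\<lambda>k. cis (2 * pi * real k / real N)) (k mod N) = (\<lambda>k. cis (2 * pi * real k / real N)) 0"
      using h by (simp add: zeta_pow)
    show "k mod N = 0" using inj_onD[OF inj e] assms by simp
  qed simp
  ultimately show ?thesis by (simp add: dvd_eq_mod_eq_0)
qed

lemma zeta_root: assumes "N > 0" "z ^ N = 1" shows "\<exists>t<N. z = zeta N ^ t"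
proof -
  have "z \<in> {z. z ^ N = 1}" using assms by simp
  then have "z \<in> (\<lambda>k. cis (2 * pi * real k / real N)) ` {..<N}"
    using Complex.bij_betw_roots_unity[OF assms(1)] by (simp add: bij_betw_def)
  then show ?thesis by (auto simp: zeta_pow)
qed

lemma zeta_mult_pow: assumes "q > 0" shows "zeta (m * q) ^ q = zeta m"
proof -
  have "zeta (m * q) ^ q = cis (2 * pi * real q / real (m * q))" by (rule zeta_pow)
  also have "2 * pi * real q / real (m * q) = 2 * pi / real m" using assms by simp
  finally show ?thesis by (simp add: zeta_def)
qed

lemma zeta_nz: "zeta N \<noteq> 0"
  by (simp add: zeta_def)

lemma unity_norm: assumes "z ^ m = 1" "m > 0" shows "cmod z = 1"
proof -
  have "cmod z ^ m = 1 ^ m" using assms by (metis norm_one norm_power power_one)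
  then show ?thesis using power_eq_imp_eq_base[of "cmod z" m 1] assms(2) by simp
qed

lemma unity_cnj: assumes "z ^ m = 1" "m > 0" shows "z ^ (m - 1) = cnj z"
proof -
  have "z * cnj z = 1" using unity_norm[OF assms] by (metis complex_norm_square of_real_1 power_one)
  have "z ^ (m - 1) * z = 1" using assms by (metis power_minus_mult)
  then have "z ^ (m - 1) = z ^ (m - 1) * (z * cnj z)" using \<open>z * cnj z = 1\<close> by simp
  also have "\<dots> = cnj z" using \<open>z ^ (m - 1) * z = 1\<close> by (metis mult.assoc mult_1)
  finally show ?thesis .
qed

lemma ip_cnj: "ip P (cnj z) = cnj (ip P z)"
proof -
  have "map_poly cnj (map_poly (of_int::int\<Rightarrow>complex) P) = map_poly of_int P"
    by (simp add: map_poly_map_poly o_def)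
  then show ?thesis by (metis poly_cnj)
qed

lemma ip_Zpart: assumes "z ^ m = 1" "m > 0"
  shows "ip (P * pcompose P (pmonom 1 (m - 1))) z = of_real ((cmod (ip P z))\<^sup>2)"
proof -
  have "ip (P * pcompose P (pmonom 1 (m - 1))) z = ip P z * ip P (z ^ (m - 1))" by simp
  also have "ip P (z ^ (m - 1)) = cnj (ip P z)" using unity_cnj[OF assms] ip_cnj by metis
  also have "ip P z * cnj (ip P z) = of_real ((cmod (ip P z))\<^sup>2)" by (rule complex_norm_square[symmetric])
  finally show ?thesis .
qed

lemma minp_roots_unity:
  assumes "x ^ m = 1" "m > 0" "g dvd Xm1 m" "ip g r = 0"
  shows "r ^ m = 1"
proof -
  obtain k where "Xm1 m = g * k" using assms(3) by (elim dvdE)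
  then have "ip (Xm1 m) r = 0" using assms(4) by simp
  then show ?thesis by simp
qed

lemma minp_card_roots:
  assumes m: "m > 0" and g: "plc g = 1" "g dvd Xm1 m"
  shows "finite {z. ip g z = 0} \<and> card {z. ip g z = 0} = pdeg g"
proof -
  define gc where "gc = map_poly (of_int::int\<Rightarrow>complex) g"
  have gnz: "g \<noteq> 0" using g by auto
  have lc: "plc gc = 1" using g by (simp add: gc_def deg_mpi coeff_map_poly)
  have gcnz: "gc \<noteq> 0" using lc by auto
  have fin: "finite {z. ip g z = 0}" using poly_roots_finite[OF gcnz] by (simp add: gc_def)
  obtain k where k: "Xm1 m = g * k" using g(2) by (elim dvdE)
  have sq: "rsquarefree gc"
    unfolding rsquarefree_roots
  proof (intro allI notI)
    fix a assume a: "poly gc a = 0 \<and> poly (pderiv gc) a = 0"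
    then have a1: "ip g a = 0" "ip (pderiv g) a = 0" by (simp_all add: gc_def ip_pderiv)
    have "a ^ m = 1" using minp_roots_unity[OF power_one m g(2) a1(1)] .
    then have anz: "a \<noteq> 0" using m by (metis power_0_left zero_neq_one gr_implies_not0)
    have "ip (pderiv (Xm1 m)) a = ip (pderiv (g * k)) a" using k by simp
    also have "\<dots> = 0" using a1 by (simp add: pderiv_mult)
    finally have "of_nat m * a ^ (m - 1) = 0" by (simp add: Xm1_def pderiv_monom pderiv_diff)
    then show False using anz m by simp
  qed
  have "psmult (plc gc) (\<Prod>z|poly gc z = 0. [:-z, 1:]) = gc"
    using complex_poly_decompose_rsquarefree[OF sq] .
  then have "gc = (\<Prod>z|poly gc z = 0. [:-z, 1:])" using lc by simp
  moreover have "pdeg (\<Prod>z|poly gc z = 0. [:-z, 1:]) = (\<Sum>z|poly gc z = 0. pdeg [:-z, (1::complex):])"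
    by (rule degree_prod_sum_eq) simp
  ultimately have "pdeg gc = (\<Sum>z|poly gc z = 0. pdeg [:-z, (1::complex):])" by simp
  also have "\<dots> = card {z. poly gc z = 0}" by simp
  finally show ?thesis using fin by (simp add: gc_def deg_mpi)
qed

lemma kronecker_cyclo:
  assumes x: "x ^ m = 1" and m: "m > 0"
    and eq: "(cmod (ip P x))\<^sup>2 + (cmod (ip Q x))\<^sup>2 = 1"
  shows "ip P x = 0 \<or> (\<exists>s>0. (ip P x) ^ s = 1)"
proof -
  obtain g where g: "minp x g" "plc g = 1" "g dvd Xm1 m" using minp_unity[OF x m] by blast
  define A where "A = {z. ip g z = 0}"
  have A: "finite A" "card A = pdeg g" using minp_card_roots[OF m g(2,3)] by (simp_all add: A_def)
  define S where "S = P * pcompose P (pmonom 1 (m - 1)) + Q * pcompose Q (pmonom 1 (m - 1)) - 1"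
  have Sz: "ip S z = of_real ((cmod (ip P z))\<^sup>2 + (cmod (ip Q z))\<^sup>2 - 1)" if "z ^ m = 1" for z
    using ip_Zpart[OF that m, of P] ip_Zpart[OF that m, of Q] by (simp add: S_def)
  have "ip S x = 0" using Sz[OF x] eq by simp
  then have gS: "g dvd S" by (rule minp_dvd[OF g(1)])
  have bound: "\<forall>r\<in>A. cmod (ip P r) \<le> 1"
  proof
    fix r assume "r \<in> A"
    then have r: "ip g r = 0" by (simp add: A_def)
    have rm: "r ^ m = 1" using minp_roots_unity[OF x m g(3) r] .
    obtain h where "S = g * h" using gS by (elim dvdE)
    then have "ip S r = 0" using r by simp
    then have "complex_of_real ((cmod (ip P r))\<^sup>2 + (cmod (ip Q r))\<^sup>2 - 1) = 0" using Sz[OF rm] by metis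
    then have "(cmod (ip P r))\<^sup>2 + (cmod (ip Q r))\<^sup>2 - 1 = 0" by (simp only: of_real_eq_0_iff)
    then have "(cmod (ip P r))\<^sup>2 + (cmod (ip Q r))\<^sup>2 = 1" by simp
    then have "(cmod (ip P r))\<^sup>2 \<le> 1\<^sup>2" by (simp add: add_nonneg_eq_0_iff) (smt (verit) zero_le_power2)
    then show "cmod (ip P r) \<le> 1" by (rule power2_le_imp_le) simp
  qed
  show ?thesis
    by (rule kronecker_root_of_unity[OF g(2) minp_root[OF g(1)] A _ minp_deg_pos[OF g(1)] bound])
       (simp add: A_def)
qed




lemma coprime_one_plus: "coprime (1 + m * c) (m::nat)"
proof (rule coprimeI)
  fix d assume d1: "d dvd 1 + m * c" and d2: "d dvd m"
  then have "d dvd m * c" by simp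
  then have "d dvd 1" using d1 by (metis add.commute dvd_add_right_iff)
  then show "is_unit d" by simp
qed

lemma unity_in_Zm:
  assumes m: "even m" "m > 0" and eta: "eta = ip P (zeta m)" and s: "s > 0" "eta ^ s = 1"
  shows "eta ^ m = 1"
proof (rule ccontr)
  assume ne: "eta ^ m \<noteq> 1"
  define ord0 where "ord0 = (LEAST s. s > 0 \<and> eta ^ s = 1)"
  have o: "ord0 > 0" "eta ^ ord0 = 1"
    using LeastI[of "\<lambda>s. s > 0 \<and> eta ^ s = 1" s] s unfolding ord0_def by auto
  have omin: "eta ^ s' \<noteq> 1" if "0 < s'" "s' < ord0" for s'
    using not_less_Least[of s' "\<lambda>s. s > 0 \<and> eta ^ s = 1"] that unfolding ord0_def by auto
  have ndvd: "\<not> ord0 dvd m"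
  proof
    assume "ord0 dvd m"
    then obtain c where "m = ord0 * c" by (elim dvdE)
    then have "eta ^ m = (eta ^ ord0) ^ c" by (simp add: power_mult)
    then show False using ne o by simp
  qed
  have "\<exists>q. nprime q \<and> multiplicity q m < multiplicity q ord0"
  proof (rule ccontr)
    assume "\<not> (\<exists>q. nprime q \<and> multiplicity q m < multiplicity q ord0)"
    then have "\<And>p. nprime p \<Longrightarrow> multiplicity p ord0 \<le> multiplicity p m" by (meson not_le)
    then have "ord0 dvd m" using o(1) by (intro multiplicity_le_imp_dvd) auto
    then show False using ndvd by simp
  qed
  then obtain q where q: "nprime q" "multiplicity q m < multiplicity q ord0" by blast
  have q1: "q > 1" using q(1) prime_gt_1_nat by blast
  have qnu: "\<not> is_unit q" using q1 by simp
  define f where "f = multiplicity q m"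
  have qf1: "q ^ (f + 1) dvd ord0" using q(2) unfolding f_def by (intro multiplicity_dvd') simp
  have qf: "q ^ f dvd m" unfolding f_def by (rule multiplicity_dvd)
  have nqf1: "\<not> q ^ (f + 1) dvd m"
  proof
    assume "q ^ (f + 1) dvd m"
    then have "f + 1 \<le> multiplicity q m" using m(2) qnu by (intro multiplicity_geI) auto
    then show False unfolding f_def by simp
  qed
  obtain o' where o': "ord0 = q ^ (f + 1) * o'" using qf1 by (elim dvdE)
  obtain m' where m': "m = q ^ f * m'" using qf by (elim dvdE)
  have o'0: "o' > 0" using o(1) o' by (cases o') auto
  have nqm': "\<not> q dvd m'"
  proof
    assume "q dvd m'"
    then obtain r where "m' = q * r" by (elim dvdE)
    then have "m = q ^ (f + 1) * r" using m' by (simp add: mult.assoc)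
    then show False using nqf1 by simp
  qed
  define eta2 where "eta2 = eta ^ o'"
  have e1: "eta2 ^ (q ^ (f + 1)) = 1"
    using o o' by (simp add: eta2_def power_mult[symmetric] mult.commute)
  have e2: "eta2 ^ (q ^ f) \<noteq> 1"
  proof -
    have "o' * q ^ f < o' * q ^ (f + 1)" using o'0 q1 by simp
    then have lt: "o' * q ^ f < ord0" using o' by (simp add: mult.commute)
    have "0 < o' * q ^ f" using o'0 q1 by simp
    then have "eta ^ (o' * q ^ f) \<noteq> 1" using omin lt by blast
    then show ?thesis by (simp add: eta2_def power_mult)
  qed
  define N where "N = m * q"
  have N0: "N > 0" using m(2) q1 by (simp add: N_def)
  have Nm': "N = m' * q ^ (f + 1)" using m' by (simp add: N_def)
  define w where "w = zeta N"
  have wq: "w ^ q = zeta m" unfolding w_def N_def using q1 by (intro zeta_mult_pow) simp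
  have wN: "w ^ N = 1" unfolding w_def using zeta_pow_eq_1[OF N0] by simp
  have wnz: "w \<noteq> 0" unfolding w_def by (rule zeta_nz)
  have eta2P: "eta2 = ip (pcompose (P ^ o') (pmonom 1 q)) w"
    by (simp add: eta2_def eta wq)
  have "eta2 ^ N = (eta2 ^ (q ^ (f + 1))) ^ m'" using Nm' by (simp add: power_mult[symmetric] mult.commute)
  then have "eta2 ^ N = 1" using e1 by simp
  then obtain t where t: "t < N" "eta2 = w ^ t" using zeta_root[OF N0] w_def by blast
  have "w ^ (t * q ^ (f + 1)) = 1" using e1 t by (simp add: power_mult)
  then have "N dvd t * q ^ (f + 1)" using zeta_pow_eq_1[OF N0] w_def by simp
  then have "m' * q ^ (f + 1) dvd t * q ^ (f + 1)" using Nm' by simp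
  then have "m' dvd t" using q1 by simp
  then obtain u where u: "t = m' * u" by (elim dvdE)
  have nqu: "\<not> q dvd u"
  proof
    assume "q dvd u"
    then obtain v where "u = q * v" by (elim dvdE)
    then have "t * q ^ f = N * v" using u Nm' by (simp add: algebra_simps)
    then have "w ^ (t * q ^ f) = 1" using wN by (simp add: power_mult)
    then show False using e2 t by (simp add: power_mult)
  qed
  define c where "c = (if q dvd (1 + m) then 2 else (1::nat))"
  define k where "k = 1 + m * c"
  have ckq: "\<not> q dvd k"
  proof
    assume qk: "q dvd k"
    show False
    proof (cases "q dvd (1 + m)")
      case True
      then have "q dvd 1 + m * 2" using qk by (simp add: k_def c_def)
      moreover have "1 + m * 2 = (1 + m) + m" by simp
      ultimately have "q dvd m" using True by (metis dvd_add_right_iff)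
      then have "q dvd 1" using True by (metis add.commute dvd_add_right_iff)
      then show False using q1 by simp
    next
      case False
      then show False using qk by (simp add: k_def c_def)
    qed
  qed
  have ck: "coprime k N"
  proof -
    have "coprime k m" unfolding k_def by (rule coprime_one_plus)
    moreover have "coprime k q" using prime_imp_coprime[OF q(1) ckq] by (simp add: coprime_commute)
    ultimately show ?thesis by (simp add: N_def)
  qed
  define R where "R = pcompose (P ^ o') (pmonom 1 q) - pmonom 1 t"
  have "ip R w = 0" using eta2P t by (simp add: R_def)
  then have "ip R (w ^ k) = 0" using transfer_coprime[OF wN N0] ck by blast
  then have A: "ip (P ^ o') ((w ^ k) ^ q) = (w ^ k) ^ t" by (simp add: R_def)
  have "(w ^ k) ^ q = w ^ q * (w ^ N) ^ c"
    by (simp add: k_def N_def power_add power_mult[symmetric] algebra_simps)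
  then have "(w ^ k) ^ q = w ^ q" using wN by simp
  then have "w ^ t = (w ^ k) ^ t" using A eta2P t by simp
  also have "\<dots> = w ^ t * w ^ (m * c * t)"
    by (simp add: k_def power_add power_mult[symmetric] algebra_simps)
  finally have "w ^ (m * c * t) = 1" using wnz by simp
  then have "N dvd m * c * t" using zeta_pow_eq_1[OF N0] w_def by simp
  then have "m * q dvd m * (c * m' * u)" using u by (simp add: N_def algebra_simps)
  then have "q dvd c * m' * u" using m(2) by simp
  then have "q dvd c" using q(1) nqm' nqu by (simp add: prime_dvd_mult_iff)
  then show False
  proof (cases "q dvd (1 + m)")
    case True
    assume "q dvd c"
    then have "q dvd 2" using True by (simp add: c_def)
    then have "q \<le> 2" by (simp add: dvd_imp_le)
    then have "q = 2" using q1 by simp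
    then show False using True m(1) by simp
  next
    case False
    assume "q dvd c"
    then show False using False q1 by (simp add: c_def)
  qed
qed


lemma unit_components:
  assumes m: "even m" "m > 0"
    and eq: "(cmod (ip P (zeta m)))\<^sup>2 + (cmod (ip Q (zeta m)))\<^sup>2 = 1"
  shows "(ip Q (zeta m) = 0 \<and> (ip P (zeta m)) ^ m = 1) \<or> (ip P (zeta m) = 0 \<and> (ip Q (zeta m)) ^ m = 1)"
proof -
  let ?a = "ip P (zeta m)" and ?b = "ip Q (zeta m)"
  have x: "zeta m ^ m = 1" using zeta_pow_eq_1[OF m(2)] by simp
  have ka: "?a = 0 \<or> (\<exists>s>0. ?a ^ s = 1)" by (rule kronecker_cyclo[OF x m(2) eq])
  have eq': "(cmod ?b)\<^sup>2 + (cmod ?a)\<^sup>2 = 1" using eq by simp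
  have kb: "?b = 0 \<or> (\<exists>s>0. ?b ^ s = 1)" by (rule kronecker_cyclo[OF x m(2) eq'])
  show ?thesis
  proof (cases "?a = 0")
    case True
    then have "?b \<noteq> 0" using eq by auto
    then obtain s where s: "s > 0" "?b ^ s = 1" using kb by blast
    have "?b ^ m = 1" by (rule unity_in_Zm[OF m refl s])
    then show ?thesis using True by simp
  next
    case False
    then obtain s where s: "s > 0" "?a ^ s = 1" using ka by blast
    have na: "cmod ?a = 1" by (rule unity_norm[OF s(2) s(1)])
    have "?b = 0"
    proof (rule ccontr)
      assume "?b \<noteq> 0"
      then obtain s' where s': "s' > 0" "?b ^ s' = 1" using kb by blast
      have "cmod ?b = 1" by (rule unity_norm[OF s'(2) s'(1)])
      then show False using na eq by simp
    qed
    moreover have "?a ^ m = 1" by (rule unity_in_Zm[OF m refl s])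
    ultimately show ?thesis by simp
  qed
qed




lemma quat_eqI: "cpart x = cpart y \<Longrightarrow> jpart x = jpart y \<Longrightarrow> x = y"
  by (simp add: quat.expand)

lemma cpart_mult[simp]: "cpart (x * y) = cpart x * cpart y - jpart x * cnj (jpart y)"
  by (simp add: times_quat_def)
lemma jpart_mult[simp]: "jpart (x * y) = cpart x * jpart y + jpart x * cnj (cpart y)"
  by (simp add: times_quat_def)
lemma cpart_add[simp]: "cpart (x + y) = cpart x + cpart y" by (simp add: plus_quat_def)
lemma jpart_add[simp]: "jpart (x + y) = jpart x + jpart y" by (simp add: plus_quat_def)
lemma cpart_uminus[simp]: "cpart (- x) = - cpart x" by (simp add: uminus_quat_def)
lemma jpart_uminus[simp]: "jpart (- x) = - jpart x" by (simp add: uminus_quat_def)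
lemma cpart_diff[simp]: "cpart (x - y) = cpart x - cpart y" by (simp add: minus_quat_def)
lemma jpart_diff[simp]: "jpart (x - y) = jpart x - jpart y" by (simp add: minus_quat_def)
lemma cpart_one[simp]: "cpart 1 = 1" by (simp add: one_quat_def)
lemma jpart_one[simp]: "jpart 1 = 0" by (simp add: one_quat_def)
lemma cpart_zero[simp]: "cpart 0 = 0" by (simp add: zero_quat_def)
lemma jpart_zero[simp]: "jpart 0 = 0" by (simp add: zero_quat_def)
lemma cpart_cq[simp]: "cpart (cq z) = z" by (simp add: cq_def)
lemma jpart_cq[simp]: "jpart (cq z) = 0" by (simp add: cq_def)
lemma cpart_jq[simp]: "cpart jq = 0" by (simp add: jq_def)
lemma jpart_jq[simp]: "jpart jq = 1" by (simp add: jq_def)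

lemma cq_mult: "cq a * cq b = cq (a * b)" by (rule quat_eqI) simp_all
lemma cq_one: "cq 1 = 1" by (rule quat_eqI) simp_all
lemma cq_pow: "cq a ^ k = cq (a ^ k)"
  by (induction k) (simp_all add: cq_one cq_mult)
lemma cq_jq: "cq z * jq = Quat 0 z" by (rule quat_eqI) simp_all
lemma cq_real_comm: "cq (of_real r) * x = x * cq (of_real r)"
  by (rule quat_eqI) simp_all

definition qconj :: "quat \<Rightarrow> quat" where "qconj q = Quat (cnj (cpart q)) (- jpart q)"

lemma cpart_qconj[simp]: "cpart (qconj x) = cnj (cpart x)" by (simp add: qconj_def)
lemma jpart_qconj[simp]: "jpart (qconj x) = - jpart x" by (simp add: qconj_def)

lemma qconj_mult: "qconj (x * y) = qconj y * qconj x"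
  by (rule quat_eqI) (simp_all add: algebra_simps)
lemma qconj_add: "qconj (x + y) = qconj x + qconj y" by (rule quat_eqI) simp_all
lemma qconj_uminus: "qconj (- x) = - qconj x" by (rule quat_eqI) simp_all
lemma qconj_one: "qconj 1 = 1" by (rule quat_eqI) simp_all
lemma qconj_cq: "qconj (cq z) = cq (cnj z)" by (rule quat_eqI) simp_all
lemma qconj_jq: "qconj jq = - jq" by (rule quat_eqI) simp_all

lemma nr_complex: "complex_of_real (nr x) = cpart x * cnj (cpart x) + jpart x * cnj (jpart x)"
  by (simp only: nr_def of_real_add complex_norm_square)

lemma mult_qconj: "x * qconj x = cq (of_real (nr x))"
  by (rule quat_eqI) (simp_all add: nr_complex algebra_simps)
lemma qconj_mult_self: "qconj x * x = cq (of_real (nr x))"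
  by (rule quat_eqI) (simp_all add: nr_complex algebra_simps)

lemma nr_mult: "nr (x * y) = nr x * nr y"
proof -
  have "complex_of_real (nr (x * y)) = complex_of_real (nr x * nr y)"
    unfolding of_real_mult nr_complex by (simp add: algebra_simps)
  then show ?thesis by (simp only: of_real_eq_iff)
qed

lemma nr_nonneg: "nr x \<ge> 0" by (simp add: nr_def)

lemma nr_eq_0: "nr x = 0 \<longleftrightarrow> x = 0"
proof
  assume "nr x = 0"
  then have "cmod (cpart x) = 0" "cmod (jpart x) = 0" unfolding nr_def
    by (simp_all add: add_nonneg_eq_0_iff)
  then show "x = 0" by (intro quat_eqI) simp_all
qed (simp add: nr_def)

lemma nr_one: "nr 1 = 1" by (simp add: nr_def)
lemma nr_qconj: "nr (qconj x) = nr x" by (simp add: nr_def)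
lemma nr_cq: "nr (cq z) = (cmod z)\<^sup>2" by (simp add: nr_def)

lemma qconj_real: "qconj (cq (of_real r)) = cq (of_real r)"
  by (simp add: qconj_cq)

section \<open>Structure of Zring\<close>

lemma Zring_zero: "0 \<in> Zring d"
proof -
  have "1 + - 1 \<in> Zring d" by (intro Zring.add Zring.neg Zring.one)
  then show ?thesis by simp
qed

lemma Zring_pow: "x \<in> Zring d \<Longrightarrow> x ^ k \<in> Zring d"
  by (induction k) (simp_all add: Zring.one Zring.mult)

lemma Zring_cq_zeta_pow: "cq (zeta d ^ k) \<in> Zring d"
  using Zring_pow[OF Zring.zeta, of d k] by (simp add: cq_pow)

lemma Zring_qconj:
  assumes d: "d > 0"
  shows "x \<in> Zring d \<Longrightarrow> qconj x \<in> Zring d"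
proof (induction rule: Zring.induct)
  case one then show ?case by (simp add: qconj_one Zring.one)
next
  case zeta
  have "zeta d ^ d = 1" using zeta_pow_eq_1[OF d] by simp
  then have "cnj (zeta d) = zeta d ^ (d - 1)" using unity_cnj[OF _ d] by simp
  then show ?case by (simp add: qconj_cq Zring_cq_zeta_pow)
next
  case j then show ?case by (simp add: qconj_jq Zring.neg Zring.j)
next
  case (add x y) then show ?case by (simp add: qconj_add Zring.add)
next
  case (neg x) then show ?case by (simp add: qconj_uminus Zring.neg)
next
  case (mult x y) then show ?case by (simp add: qconj_mult Zring.mult)
qed

lemma Zring_char:
  assumes d: "d > 0"
  shows "x \<in> Zring d \<Longrightarrow> \<exists>P Q. x = Quat (ip P (zeta d)) (ip Q (zeta d))"
proof (induction rule: Zring.induct)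
  case one
  have "1 = Quat (ip 1 (zeta d)) (ip 0 (zeta d))" by (rule quat_eqI) simp_all
  then show ?case by blast
next
  case zeta
  have "cq (zeta d) = Quat (ip (pmonom 1 1) (zeta d)) (ip 0 (zeta d))" by (rule quat_eqI) simp_all
  then show ?case by blast
next
  case j
  have "jq = Quat (ip 0 (zeta d)) (ip 1 (zeta d))" by (rule quat_eqI) simp_all
  then show ?case by blast
next
  case (add x y)
  then obtain P1 Q1 P2 Q2 where "x = Quat (ip P1 (zeta d)) (ip Q1 (zeta d))" "y = Quat (ip P2 (zeta d)) (ip Q2 (zeta d))"
    by blast
  then have "x + y = Quat (ip (P1 + P2) (zeta d)) (ip (Q1 + Q2) (zeta d))" by (intro quat_eqI) simp_all
  then show ?case by blast
next
  case (neg x)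
  then obtain P1 Q1 where "x = Quat (ip P1 (zeta d)) (ip Q1 (zeta d))" by blast
  then have "- x = Quat (ip (- P1) (zeta d)) (ip (- Q1) (zeta d))" by (intro quat_eqI) simp_all
  then show ?case by blast
next
  case (mult x y)
  then obtain P1 Q1 P2 Q2 where xy: "x = Quat (ip P1 (zeta d)) (ip Q1 (zeta d))" "y = Quat (ip P2 (zeta d)) (ip Q2 (zeta d))"
    by blast
  have zd: "zeta d ^ d = 1" using zeta_pow_eq_1[OF d] by simp
  have cj: "ip R (zeta d ^ (d - Suc 0)) = cnj (ip R (zeta d))" for R
  proof -
    have "cnj (ip R (zeta d)) = ip R (cnj (zeta d))" by (simp add: ip_cnj)
    also have "cnj (zeta d) = zeta d ^ (d - 1)" using unity_cnj[OF zd d] by simp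
    finally show ?thesis by simp
  qed
  have "x * y = Quat (ip (P1 * P2 - Q1 * pcompose Q2 (pmonom 1 (d - 1))) (zeta d))
                     (ip (P1 * Q2 + Q1 * pcompose P2 (pmonom 1 (d - 1))) (zeta d))"
    using xy by (intro quat_eqI) (simp_all add: cj)
  then show ?case by blast
qed

definition G0 :: "nat \<Rightarrow> quat set" where "G0 n = {x \<in> Zring (2 * n). nr x = 1}"

lemma G0_eq_Q4:
  assumes n: "n \<ge> 1"
  shows "G0 n = carrier (Q4 n)"
proof
  define m where "m = 2 * n"
  have m: "even m" "m > 0" using n by (simp_all add: m_def)
  have zm: "zeta m ^ m = 1" using zeta_pow_eq_1[OF m(2)] by simp
  show "G0 n \<subseteq> carrier (Q4 n)"
  proof
    fix x assume "x \<in> G0 n"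
    then have x: "x \<in> Zring m" "nr x = 1" by (simp_all add: G0_def m_def)
    obtain P Q where PQ: "x = Quat (ip P (zeta m)) (ip Q (zeta m))" using Zring_char[OF m(2) x(1)] by blast
    have "(cmod (ip P (zeta m)))\<^sup>2 + (cmod (ip Q (zeta m)))\<^sup>2 = 1" using x(2) PQ by (simp add: nr_def)
    then have "(ip Q (zeta m) = 0 \<and> (ip P (zeta m)) ^ m = 1) \<or> (ip P (zeta m) = 0 \<and> (ip Q (zeta m)) ^ m = 1)"
      by (rule unit_components[OF m])
    then show "x \<in> carrier (Q4 n)"
    proof
      assume a: "ip Q (zeta m) = 0 \<and> ip P (zeta m) ^ m = 1"
      then obtain t where t: "t < m" "ip P (zeta m) = zeta m ^ t" using zeta_root[OF m(2)] by blast
      have "x = cq (zeta (2 * n) ^ t)" using PQ a t by (simp add: cq_def m_def)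
      then show ?thesis using t by (auto simp: Q4_def m_def)
    next
      assume a: "ip P (zeta m) = 0 \<and> ip Q (zeta m) ^ m = 1"
      then obtain t where t: "t < m" "ip Q (zeta m) = zeta m ^ t" using zeta_root[OF m(2)] by blast
      have "x = cq (zeta (2 * n) ^ t) * jq" using PQ a t by (simp add: cq_jq m_def)
      then show ?thesis using t by (auto simp: Q4_def m_def)
    qed
  qed
  show "carrier (Q4 n) \<subseteq> G0 n"
  proof
    fix x assume "x \<in> carrier (Q4 n)"
    then obtain k where "x = cq (zeta (2 * n) ^ k) \<or> x = cq (zeta (2 * n) ^ k) * jq"
      by (auto simp: Q4_def)
    moreover have c1: "cmod (zeta (2 * n) ^ k) = 1"
      by (simp add: zeta_def norm_power)
    moreover have "nr jq = 1" by (simp add: nr_def)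
    moreover have "cq (zeta (2 * n) ^ k) * jq \<in> Zring (2 * n)"
      by (intro Zring.mult Zring_cq_zeta_pow Zring.j)
    ultimately show "x \<in> G0 n"
      by (auto simp: G0_def Zring_cq_zeta_pow nr_cq nr_mult)
  qed
qed




lemma unitq_carrier[simp]: "carrier unitq = {q. nr q = 1}" by (simp add: unitq_def)
lemma unitq_mult[simp]: "x \<otimes>\<^bsub>unitq\<^esub> y = x * y" by (simp add: unitq_def)
lemma unitq_one[simp]: "\<one>\<^bsub>unitq\<^esub> = 1" by (simp add: unitq_def)

lemma cq_of_real_1: "cq (of_real 1) = 1" by (simp add: cq_one)

lemma unitq_group: "group unitq"
proof (rule groupI)
  fix x assume x: "x \<in> carrier unitq"
  then have "qconj x \<otimes>\<^bsub>unitq\<^esub> x = \<one>\<^bsub>unitq\<^esub>" by (simp add: qconj_mult_self cq_one)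
  moreover have "qconj x \<in> carrier unitq" using x by (simp add: nr_qconj)
  ultimately show "\<exists>y\<in>carrier unitq. y \<otimes>\<^bsub>unitq\<^esub> x = \<one>\<^bsub>unitq\<^esub>" by blast
qed (simp_all add: nr_mult nr_one mult.assoc)

lemma inv_unitq: "nr x = 1 \<Longrightarrow> inv\<^bsub>unitq\<^esub> x = qconj x"
  by (rule group.inv_equality[OF unitq_group]) (simp_all add: qconj_mult_self cq_one nr_qconj)

lemma G0_subgroup: assumes n: "n \<ge> 1" shows "subgroup (G0 n) unitq"
proof (rule group.subgroupI[OF unitq_group])
  show "G0 n \<subseteq> carrier unitq" by (auto simp: G0_def)
  show "G0 n \<noteq> {}" using Zring.one nr_one by (auto simp: G0_def)
  fix a assume a: "a \<in> G0 n"
  then have "qconj a \<in> Zring (2 * n)" using n by (intro Zring_qconj) (auto simp: G0_def)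
  then show "inv\<^bsub>unitq\<^esub> a \<in> G0 n" using a by (simp add: G0_def inv_unitq nr_qconj)
next
  fix a b assume "a \<in> G0 n" "b \<in> G0 n"
  then show "a \<otimes>\<^bsub>unitq\<^esub> b \<in> G0 n" by (auto simp: G0_def Zring.mult nr_mult)
qed


lemma free_unfold: assumes free: "free_left_module L I"
  shows "\<exists>B. B \<subseteq> I \<and> (\<forall>F c. finite F \<and> F \<subseteq> B \<and> (\<forall>b\<in>F. c b \<in> L) \<and> (\<Sum>b\<in>F. c b * b) = 0
            \<longrightarrow> (\<forall>b\<in>F. c b = 0)) \<and>
     (\<forall>x\<in>I. \<exists>F c. finite F \<and> F \<subseteq> B \<and> (\<forall>b\<in>F. c b \<in> L) \<and> x = (\<Sum>b\<in>F. c b * b))"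
  using free unfolding free_left_module_def .
lemma obtain3: assumes "\<exists>B. B \<subseteq> I \<and> P B \<and> Q B"
  obtains B where "B \<subseteq> I" "P B" "Q B"
  using assms by blast

theorem lemma4p2:
  fixes n :: nat and I :: "quat set" and U :: "quat set"
  assumes "n \<ge> 2"
    and "\<forall>\<Gamma>. maximal_order (Qalg (2*n)) \<Gamma> \<and> Zring (2*n) \<subseteq> \<Gamma>
              \<longrightarrow> norm_one_group \<Gamma> \<cong> Q4 n"
    and "left_ideal (Zring (2*n)) I" and "I \<noteq> {0}"
    and "finite U" and "U \<subseteq> Qalg (2*n)"
    and "\<forall>u\<in>U. nr u = 1 \<and> (\<forall>x\<in>I. x * u \<in> I)"
    and "\<not> (\<exists>H. subgroup H (Q4 n) \<and>
              unitq\<lparr>carrier := generate unitq U\<rparr> \<cong> (Q4 n)\<lparr>carrier := H\<rparr>)"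
  shows "\<not> free_left_module (Zring (2*n)) I"
proof
  assume free: "free_left_module (Zring (2*n)) I"
  let ?L = "Zring (2*n)"
  have n1: "n \<ge> 1" using assms(1) by simp
  have d0: "2 * n > 0" using n1 by simp
  obtain B where B: "B \<subseteq> I"
    and indep: "\<forall>F c. finite F \<and> F \<subseteq> B \<and> (\<forall>b\<in>F. c b \<in> ?L) \<and> (\<Sum>b\<in>F. c b * b) = 0
            \<longrightarrow> (\<forall>b\<in>F. c b = 0)"
    and span: "\<forall>x\<in>I. \<exists>F c. finite F \<and> F \<subseteq> B \<and> (\<forall>b\<in>F. c b \<in> ?L) \<and> x = (\<Sum>b\<in>F. c b * b)"
    by (rule obtain3[OF free_unfold[OF free]])
  have li: "I \<subseteq> ?L" "0 \<in> I" using assms(3) unfolding left_ideal_def by blast+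
  have one_ne_zero: "(1::quat) \<noteq> 0" by (simp add: one_quat_def zero_quat_def)
  have B0: "0 \<notin> B"
  proof
    assume "0 \<in> B"
    then have "(\<lambda>_. (1::quat)) 0 = 0"
      using indep[rule_format, of "{0}" "\<lambda>_. 1"] Zring.one by simp
    then show False using one_ne_zero by simp
  qed
  obtain x0 where x0: "x0 \<in> I" "x0 \<noteq> 0" using assms(4) li(2) by blast
  have "B \<noteq> {}"
  proof
    assume Be: "B = {}"
    obtain F c where Fc: "finite F \<and> F \<subseteq> B \<and> (\<forall>z\<in>F. c z \<in> ?L) \<and> x0 = (\<Sum>z\<in>F. c z * z)"
      using bspec[OF span x0(1)] by blast
    then have F: "F \<subseteq> B" "x0 = (\<Sum>b\<in>F. c b * b)" by simp_all
    then have "F = {}" using Be by simp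
    then show False using F x0 by simp
  qed
  then obtain b where bB: "b \<in> B" by blast
  have bnz: "b \<noteq> 0" using B0 bB by auto
  have bI: "b \<in> I" using B bB by blast
  have bL: "b \<in> ?L" using li(1) bI by blast
  have Bsing: "b' = b" if b'B: "b' \<in> B" for b'
  proof (rule ccontr)
    assume ne: "b' \<noteq> b"
    have b'L: "b' \<in> ?L" using b'B B li(1) by blast
    define c where "c = (\<lambda>z. if z = b' then b * qconj b' else - (b' * qconj b'))"
    have cL: "\<forall>z\<in>{b', b}. c z \<in> ?L"
      using bL b'L Zring_qconj[OF d0] by (auto simp: c_def intro!: Zring.mult Zring.neg)
    have "(\<Sum>z\<in>{b', b}. c z * z) = c b' * b' + c b * b" using ne by simp
    also have "\<dots> = b * (qconj b' * b') - (b' * qconj b') * b" using ne by (simp add: c_def mult.assoc)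
    also have "\<dots> = 0" by (simp add: qconj_mult_self mult_qconj cq_real_comm)
    finally have "(\<Sum>z\<in>{b', b}. c z * z) = 0" .
    then have prem: "finite {b', b} \<and> {b', b} \<subseteq> B \<and> (\<forall>z\<in>{b', b}. c z \<in> ?L) \<and> (\<Sum>z\<in>{b', b}. c z * z) = 0"
      using cL b'B bB by simp
    have "\<forall>z\<in>{b', b}. c z = 0" using mp[OF spec[OF spec[OF indep, of "{b', b}"], of c] prem] .
    then have "c b = 0" by simp
    then have "b' * qconj b' = 0" using ne by (simp add: c_def)
    then have "nr b' = 0" by (simp add: mult_qconj cq_def zero_quat_def)
    then show False using B0 b'B nr_eq_0 by auto
  qed
  have rep: "\<exists>c\<in>?L. x = c * b" if xI: "x \<in> I" for x
  proof -
    obtain F c where Fc: "finite F \<and> F \<subseteq> B \<and> (\<forall>z\<in>F. c z \<in> ?L) \<and> x = (\<Sum>z\<in>F. c z * z)"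
      using bspec[OF span xI] by blast
    then have F: "finite F" "F \<subseteq> B" "\<forall>z\<in>F. c z \<in> ?L" "x = (\<Sum>z\<in>F. c z * z)" by simp_all
    have "F \<subseteq> {b}" using F(2) Bsing by auto
    then have "F = {} \<or> F = {b}" by auto
    then show ?thesis
    proof
      assume "F = {}"
      then have "x = 0 * b" using F(4) by simp
      then show ?thesis using Zring_zero by blast
    next
      assume "F = {b}"
      then show ?thesis using F(3,4) by auto
    qed
  qed
  have nrb: "nr b > 0" using nr_nonneg[of b] nr_eq_0[of b] bnz by linarith
  define binv where "binv = cq (of_real (1 / nr b)) * qconj b"
  have cqr: "cq (of_real r) * cq (of_real s) = cq (of_real (r * s))" for r s
    by (simp add: cq_mult)
  have key: "cq (of_real (1 / nr b)) * cq (of_real (nr b)) = 1"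
  proof -
    have "cq (of_real (1 / nr b)) * cq (of_real (nr b)) = cq (of_real (1 / nr b) * of_real (nr b))"
      by (rule cq_mult)
    also have "of_real (1 / nr b) * of_real (nr b) = (1::complex)"
      using nrb by (simp add: field_simps)
    finally show ?thesis by (simp add: cq_one)
  qed
  have bbinv: "b * binv = 1"
  proof -
    have "b * binv = cq (of_real (1 / nr b)) * (b * qconj b)"
      unfolding binv_def by (metis cq_real_comm mult.assoc)
    also have "\<dots> = 1" using key by (simp only: mult_qconj)
    finally show ?thesis .
  qed
  have binvb: "binv * b = 1"
  proof -
    have "binv * b = cq (of_real (1 / nr b)) * (qconj b * b)" unfolding binv_def by (simp add: mult.assoc)
    also have "\<dots> = 1" using key by (simp only: qconj_mult_self)
    finally show ?thesis .
  qed
  define phi where "phi = (\<lambda>x. b * x * binv)"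
  have phimult: "phi (x * y) = phi x * phi y" for x y
  proof -
    have "phi x * phi y = b * x * (binv * b) * y * binv" by (simp add: phi_def mult.assoc)
    then show ?thesis using binvb by (simp add: phi_def mult.assoc)
  qed
  have phione: "phi 1 = 1" using bbinv by (simp add: phi_def)
  have phiinj: "x = y" if "phi x = phi y" for x y
  proof -
    have e: "binv * phi z * b = (binv * b) * z * (binv * b)" for z by (simp add: phi_def mult.assoc)
    have "binv * phi x * b = x" using binvb e[of x] by simp
    moreover have "binv * phi y * b = y" using binvb e[of y] by simp
    ultimately show ?thesis using that by metis
  qed
  have nrbinv: "nr b * nr binv = 1" using bbinv by (metis nr_mult nr_one)
  have phinr: "nr (phi x) = nr x" for x
  proof -
    have "nr (phi x) = nr x * (nr b * nr binv)" by (simp add: phi_def nr_mult)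
    then show ?thesis using nrbinv by simp
  qed
  have phiconj: "phi (qconj x) = qconj (phi x)" if "nr x = 1" for x
  proof -
    have "phi x * phi (qconj x) = 1" using that phimult[of x "qconj x"] phione
      by (simp add: mult_qconj cq_one)
    moreover have "qconj (phi x) * phi x = 1" using that phinr[of x] by (simp add: qconj_mult_self cq_one)
    ultimately have "qconj (phi x) = qconj (phi x) * (phi x * phi (qconj x))" by simp
    also have "\<dots> = phi (qconj x)"
      using \<open>qconj (phi x) * phi x = 1\<close> by (metis mult.assoc mult_1)
    finally show ?thesis by simp
  qed
  have phiU: "phi u \<in> G0 n" if "u \<in> U" for u
  proof -
    have u: "nr u = 1" "\<forall>x\<in>I. x * u \<in> I" using assms(7) that by auto
    then have "b * u \<in> I" using bI by blast
    then obtain c where c: "c \<in> ?L" "b * u = c * b" using rep by blast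
    have "phi u = (b * u) * binv" by (simp add: phi_def)
    also have "\<dots> = c * (b * binv)" using c(2) by (simp add: mult.assoc)
    finally have "phi u = c" using bbinv by simp
    moreover have "nr (phi u) = 1" using phinr u by simp
    ultimately show ?thesis using c(1) by (simp add: G0_def)
  qed
  define K where "K = {x \<in> carrier unitq. phi x \<in> G0 n}"
  have G0sub: "subgroup (G0 n) unitq" by (rule G0_subgroup[OF n1])
  have Ksub: "subgroup K unitq"
  proof (rule group.subgroupI[OF unitq_group])
    show "K \<subseteq> carrier unitq" by (auto simp: K_def)
    have "1 \<in> K" using phione subgroup.one_closed[OF G0sub] by (simp add: K_def nr_one)
    then show "K \<noteq> {}" by blast
    fix a assume a: "a \<in> K"
    then have a1: "nr a = 1" "phi a \<in> G0 n" by (auto simp: K_def)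
    have "qconj (phi a) \<in> G0 n"
      using subgroup.m_inv_closed[OF G0sub a1(2)] inv_unitq[of "phi a"] a1(2) by (simp add: G0_def)
    then show "inv\<^bsub>unitq\<^esub> a \<in> K" using a1 by (simp add: K_def inv_unitq phiconj nr_qconj)
  next
    fix a c assume "a \<in> K" "c \<in> K"
    then show "a \<otimes>\<^bsub>unitq\<^esub> c \<in> K"
      using subgroup.m_closed[OF G0sub] by (auto simp: K_def nr_mult phimult)
  qed
  have Ucar: "U \<subseteq> carrier unitq" using assms(7) by auto
  have UK: "U \<subseteq> K" using Ucar phiU by (auto simp: K_def)
  have genK: "generate unitq U \<subseteq> K" by (rule group.generate_subgroup_incl[OF unitq_group UK Ksub])
  have gensub: "subgroup (generate unitq U) unitq" by (rule group.generate_is_subgroup[OF unitq_group Ucar])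
  define H where "H = phi ` generate unitq U"
  have HG0: "H \<subseteq> G0 n" using genK by (auto simp: K_def H_def)
  have Hsub: "subgroup H unitq"
  proof (rule group.subgroupI[OF unitq_group])
    show "H \<subseteq> carrier unitq" using HG0 by (auto simp: G0_def)
    have "1 \<in> generate unitq U" using subgroup.one_closed[OF gensub] by simp
    then show "H \<noteq> {}" by (auto simp: H_def)
    fix a assume "a \<in> H"
    then obtain x where x: "x \<in> generate unitq U" "a = phi x" by (auto simp: H_def)
    have xn: "nr x = 1" using subgroup.subset[OF gensub] x(1) by auto
    have "inv\<^bsub>unitq\<^esub> x \<in> generate unitq U" using subgroup.m_inv_closed[OF gensub x(1)] .
    then have "qconj x \<in> generate unitq U" using xn by (simp add: inv_unitq)
    moreover have "inv\<^bsub>unitq\<^esub> a = phi (qconj x)" using x xn phinr by (simp add: inv_unitq phiconj)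
    ultimately show "inv\<^bsub>unitq\<^esub> a \<in> H" by (simp add: H_def)
  next
    fix a c assume "a \<in> H" "c \<in> H"
    then obtain x y where "x \<in> generate unitq U" "a = phi x" "y \<in> generate unitq U" "c = phi y"
      by (auto simp: H_def)
    moreover have "x * y \<in> generate unitq U" using subgroup.m_closed[OF gensub] calculation by simp
    ultimately have "a * c = phi (x * y)" "x * y \<in> generate unitq U" by (simp_all add: phimult)
    then show "a \<otimes>\<^bsub>unitq\<^esub> c \<in> H" unfolding H_def by simp
  qed
  have Q4eq: "Q4 n = unitq\<lparr>carrier := G0 n\<rparr>"
  proof -
    have "Q4 n = unitq\<lparr>carrier := carrier (Q4 n)\<rparr>" by (simp add: Q4_def)
    then show ?thesis using G0_eq_Q4[OF n1] by simp
  qed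
  have HQ: "subgroup H (Q4 n)"
    using group.subgroup_incl[OF unitq_group Hsub G0sub HG0] Q4eq by simp
  have "phi \<in> iso (unitq\<lparr>carrier := generate unitq U\<rparr>) ((Q4 n)\<lparr>carrier := H\<rparr>)"
    unfolding iso_def hom_def
  proof (intro CollectI conjI)
    show "phi \<in> carrier (unitq\<lparr>carrier := generate unitq U\<rparr>) \<rightarrow> carrier ((Q4 n)\<lparr>carrier := H\<rparr>)"
      by (auto simp: H_def)
    show "\<forall>x\<in>carrier (unitq\<lparr>carrier := generate unitq U\<rparr>). \<forall>y\<in>carrier (unitq\<lparr>carrier := generate unitq U\<rparr>).
        phi (x \<otimes>\<^bsub>unitq\<lparr>carrier := generate unitq U\<rparr>\<^esub> y) = phi x \<otimes>\<^bsub>(Q4 n)\<lparr>carrier := H\<rparr>\<^esub> phi y"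
      by (simp add: Q4_def unitq_def phimult)
    show "bij_betw phi (carrier (unitq\<lparr>carrier := generate unitq U\<rparr>)) (carrier ((Q4 n)\<lparr>carrier := H\<rparr>))"
      by (auto simp: bij_betw_def H_def inj_on_def intro: phiinj)
  qed
  then have "unitq\<lparr>carrier := generate unitq U\<rparr> \<cong> (Q4 n)\<lparr>carrier := H\<rparr>" by (rule is_isoI)
  then show False using assms(8) HQ by blast
qed


end
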